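(* For $n\geq0$ let $T_n$ be the total number of lattice points lying on the $x$-axis, summed over all symmetric Dyck paths of length $2n$, and let $d_n$ be the number of such paths. Let $C(x)=\frac{1-\sqrt{1-4x}}{2x}$, $B(x)=\frac{1}{\sqrt{1-4x}}$, and $C_m=\frac{1}{m+1}\binom{2m}{m}$. Then $$\sum_{n\geq0}T_nx^n=2\,C(x^2)\cdot\frac{1}{2x}\left(\sqrt{\frac{1+2x}{1-2x}}-1\right)-C(x^2)=1+2x+5x^2+8x^3+18x^4+30x^5+65x^6+112x^7+\cdots.$$ Moreover: $\sum_{m\geq0}T_{2m}x^{2m}=C(x^2)\left[2B(x^2)-1\right]$ and the average number of points on the $x$-axis for $n=2m$ is $\frac{T_{2m}}{d_{2m}}=\frac{\binom{2m+2}{m+1}-C_m}{\binom{2m}{m}}=\frac{4m+1}{m+1}\to4$; and $\sum_{m\geq0}T_{2m+1}x^{2m+1}=2xB(x^2)C(x^2)^2$ and for $n=2m+1$ the average is $\frac{T_{2m+1}}{d_{2m+1}}=\frac{2\binom{2m+2}{m}}{\binom{2m+1}{m}}=\frac{4(m+1)}{m+2}\to4$ as $m\to\infty$.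
   Context: A Dyck path of length $2n$ is a lattice path from $(0,0)$ to $(2n,0)$ with steps $U=(1,1)$, $D=(1,-1)$ never going below the $x$-axis. It is symmetric if it is invariant under reflection in the line $x=n$ (its $i$-th step is $U$ iff its $(2n+1-i)$-th step is $D$). The points on the $x$-axis of a path are its vertices with $y$-coordinate $0$, including both endpoints. *)

theory Defs
  imports Complex_Main
begin

text \<open>A lattice path is a list of steps; True = U = (1,1), False = D = (1,-1).\<close>

definition step_val :: "bool \<Rightarrow> int" where
  "step_val b = (if b then 1 else -1)"

definition height :: "bool list \<Rightarrow> nat \<Rightarrow> int" where
  "height p k = (\<Sum>i<k. step_val (p ! i))"

definition dyck_path :: "nat \<Rightarrow> bool list \<Rightarrow> bool" where
  "dyck_path n p \<longleftrightarrow> length p = 2 * n \<and> (\<forall>k\<le>2 * n. height p k \<ge> 0) \<and> height p (2 * n) = 0"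

text \<open>Symmetric: the i-th step (1-based) is U iff the (2n+1-i)-th step is D.\<close>
definition symmetric_path :: "nat \<Rightarrow> bool list \<Rightarrow> bool" where
  "symmetric_path n p \<longleftrightarrow> (\<forall>i<2 * n. p ! i \<longleftrightarrow> \<not> p ! (2 * n - 1 - i))"

definition sym_dyck_paths :: "nat \<Rightarrow> bool list set" where
  "sym_dyck_paths n = {p. dyck_path n p \<and> symmetric_path n p}"

definition axis_points :: "nat \<Rightarrow> bool list \<Rightarrow> nat" where
  "axis_points n p = card {k. k \<le> 2 * n \<and> height p k = 0}"

definition d_seq :: "nat \<Rightarrow> nat" where
  "d_seq n = card (sym_dyck_paths n)"

definition T_seq :: "nat \<Rightarrow> nat" where
  "T_seq n = (\<Sum>p\<in>sym_dyck_paths n. axis_points n p)"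

definition Cgf :: "real \<Rightarrow> real" where
  "Cgf x = (1 - sqrt (1 - 4 * x)) / (2 * x)"

definition Bgf :: "real \<Rightarrow> real" where
  "Bgf x = 1 / sqrt (1 - 4 * x)"

definition catalan :: "nat \<Rightarrow> real" where
  "catalan m = 1 / (real m + 1) * real ((2 * m) choose m)"

end

theory Submission
  imports Defs "HOL-Analysis.Analysis"
begin


definition cb :: "nat \<Rightarrow> real" where "cb n = real ((2*n) choose n)"

lemma cb_fact: "cb n = fact (2*n) / (fact n * fact n)"
  unfolding cb_def by (subst binomial_fact) (auto simp: mult_2)

lemma cb_Suc_nat: "((2*n+2) choose (n+1)) * (n+1) = 2*(2*n+1)*((2*n) choose n)"
proof -
  have a: "(n+1) * ((2*n+2) choose (n+1)) = (2*n+2) * ((2*n+1) choose n)"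
    using Suc_times_binomial[of n "2*n+1"] by simp
  have b: "(2*n+1) * ((2*n) choose n) = ((2*n+1) choose (n+1)) * (n+1)"
    using Suc_times_binomial_eq[of "2*n" n] by simp
  have c: "((2*n+1) choose (n+1)) = ((2*n+1) choose n)"
    using binomial_symmetric[of n "2*n+1"] by simp
  have aux: "X = 2*Y" if h: "(n+1)*X = (2*n+2)*Y" for X Y :: nat
  proof -
    have "(n+1)*X = (n+1)*(2*Y)" using h by (simp add: algebra_simps)
    moreover have "n+1 \<noteq> 0" by simp
    ultimately show ?thesis by (metis mult_left_cancel)
  qed
  from aux[OF a] have d: "((2*n+2) choose (n+1)) = 2 * ((2*n+1) choose n)" .
  have "((2*n+2) choose (n+1)) * (n+1) = 2 * (((2*n+1) choose (n+1)) * (n+1))"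
    unfolding d c by (simp only: ac_simps)
  also have "\<dots> = 2*(2*n+1)*((2*n) choose n)" unfolding b[symmetric] by (simp only: ac_simps)
  finally show ?thesis .
qed

lemma cb_Suc: "cb (Suc n) * (real n + 1) = 2 * (2 * real n + 1) * cb n"
proof -
  have "real (((2*n+2) choose (n+1)) * (n+1)) = real (2*(2*n+1)*((2*n) choose n))"
    using cb_Suc_nat by presburger
  have e: "2 * Suc n = 2*n+2" "Suc n = n+1" by simp_all
  from this have "cb (Suc n) = real ((2*n+2) choose (n+1))" unfolding cb_def by (simp only: e)
  then show ?thesis unfolding cb_def using \<open>real (((2*n+2) choose (n+1)) * (n+1)) = _\<close>
    by (simp only: of_nat_mult of_nat_add of_nat_numeral of_nat_1)
qed

lemma gch_Suc: "(a::real) gchoose (Suc k) = (a gchoose k) * (a - real k) / (real k + 1)"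
  using gbinomial_mult_1[of a k] by (simp add: field_simps)

lemma coef_B: "((-1/2::real) gchoose n) * (-4)^n = cb n"
proof (induction n)
  case 0 then show ?case by (simp add: cb_def)
next
  case (Suc n)
  have "((-1/2::real) gchoose Suc n) * (-4)^Suc n = (((-1/2::real) gchoose n) * (-4)^n) * ((4*real n + 2)/(real n + 1))"
    by (simp add: gch_Suc field_simps)
  also have "\<dots> = cb (Suc n)" using Suc cb_Suc[of n] by (simp add: field_simps)
  finally show ?case .
qed

lemma coef_S: "((1/2::real) gchoose Suc n) * (-4)^Suc n = -2 * cb n / (real n + 1)"
proof (induction n)
  case 0 then show ?case by (simp add: cb_def)
next
  case (Suc n)
  have e: "((1/2::real) gchoose Suc (Suc n)) = ((1/2::real) gchoose Suc n) * (1/2 - real (Suc n)) / (real (Suc n) + 1)"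
    by (rule gch_Suc)
  have "((1/2::real) gchoose Suc (Suc n)) * (-4)^Suc (Suc n) = (((1/2::real) gchoose Suc n) * (-4)^Suc n) * ((4*real n + 2)/(real n + 2))"
    unfolding e by (simp only: power_Suc[of "-4::real" "Suc n"]) (simp add: field_simps)
  also have "\<dots> = -2 * cb (Suc n) / (real (Suc n) + 1)"
  proof -
    define P where "P = ((1/2::real) gchoose Suc n) * (-4)^Suc n"
    have nz: "real n + 1 \<noteq> 0" "real n + 2 \<noteq> 0" by auto
    have h1: "P*(real n+1) = -2*cb n" unfolding P_def Suc using nz by simp
    have "P*(4*real n+2)*(real n+1) = (P*(real n+1))*(4*real n+2)" by (simp only: ac_simps)
    also have "\<dots> = -2 * (2*(2*real n+1)*cb n)" unfolding h1 by (simp add: algebra_simps)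
    also have "\<dots> = (-2*cb (Suc n))*(real n+1)" unfolding cb_Suc[symmetric] by (simp add: algebra_simps)
    finally have fin: "P*(4*real n+2) = -2*cb (Suc n)" using nz(1) by (metis mult_right_cancel)
    have "P * ((4*real n + 2)/(real n + 2)) = (P*(4*real n+2))/(real n+2)" by simp
    also have "\<dots> = -2*cb (Suc n)/(real (Suc n)+1)" unfolding fin by (simp add: add.commute)
    finally show ?thesis by (simp only: P_def)
  qed
  finally show ?case .
qed

lemma B_series: assumes "\<bar>y\<bar> < 1/4" shows "(\<lambda>n. cb n * y^n) sums Bgf y"
proof -
  have "\<bar>-4*y\<bar> < 1" using assms by simp
  from gen_binomial_real[OF this, of "-1/2"]
  have "(\<lambda>n. ((-1/2::real) gchoose n) * (-4*y)^n) sums (1 + -4*y) powr (-1/2)" .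
  moreover have "(1 + -4*y) powr (-1/2) = Bgf y"
  proof -
    have p: "0 \<le> 1 + -4*y" using assms by simp
    have "(1 + -4*y) powr (-1/2) = (1 + -4*y) powr (-(1/2))" by simp
    also have "\<dots> = inverse ((1 + -4*y) powr (1/2))" by (rule powr_minus)
    also have "\<dots> = inverse (sqrt (1 + -4*y))" using powr_half_sqrt[OF p] by simp
    also have "\<dots> = Bgf y" unfolding Bgf_def by (simp add: divide_inverse)
    finally show ?thesis .
  qed
  moreover have "((-1/2::real) gchoose n) * (-4*y)^n = cb n * y^n" for n
  proof -
    have "((-1/2::real) gchoose n) * (-4*y)^n = (((-1/2::real) gchoose n) * (-4)^n) * y^n"
      by (simp only: power_mult_distrib mult.assoc)
    also have "\<dots> = cb n * y^n" unfolding coef_B by simp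
    finally show ?thesis .
  qed
  ultimately show ?thesis by simp
qed

lemma C_series: assumes "0 < \<bar>y\<bar>" "\<bar>y\<bar> < 1/4" shows "(\<lambda>n. cb n / (real n + 1) * y^n) sums Cgf y"
proof -
  have "\<bar>-4*y\<bar> < 1" using assms by simp
  from sqrt_series[OF this]
  have "(\<lambda>n. ((1/2::real) gchoose n) * (-4*y)^n) sums sqrt (1 + -4*y)" .
  hence "(\<lambda>n. ((1/2::real) gchoose Suc n) * (-4*y)^Suc n) sums (sqrt (1 + -4*y) - 1)"
    by (subst sums_Suc_iff) simp
  moreover have "((1/2::real) gchoose Suc n) * (-4*y)^Suc n = (-2*y) * (cb n / (real n + 1) * y^n)" for n
  proof -
    have "((1/2::real) gchoose Suc n) * (-4*y)^Suc n = (((1/2::real) gchoose Suc n) * (-4)^Suc n) * y^Suc n"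
      by (simp only: power_mult_distrib mult.assoc)
    also have "\<dots> = (-2*y) * (cb n / (real n + 1) * y^n)" unfolding coef_S by simp
    finally show ?thesis .
  qed
  ultimately have "(\<lambda>n. (-2*y) * (cb n / (real n + 1) * y^n)) sums (sqrt (1 + -4*y) - 1)" by simp
  hence "(\<lambda>n. (-2*y) * (cb n / (real n + 1) * y^n) / (-2*y)) sums ((sqrt (1 + -4*y) - 1) / (-2*y))"
    by (rule sums_divide)
  moreover have "(sqrt (1 + -4*y) - 1) / (-2*y) = Cgf y"
  proof -
    have "(sqrt (1 + -4*y) - 1) / (-2*y) = (-(1 - sqrt (1 - 4*y))) / (-(2*y))" by simp
    also have "\<dots> = Cgf y" unfolding Cgf_def by (rule minus_divide_divide)
    finally show ?thesis .
  qed
  moreover have "(\<lambda>n. (-2*y) * (cb n / (real n + 1) * y^n) / (-2*y)) = (\<lambda>n. cb n / (real n + 1) * y^n)"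
    using assms by auto
  ultimately show ?thesis by simp
qed



lemma alg1:
  fixes s y :: real
  assumes "s > 0" "s^2 = 1 - 4*y" "y \<noteq> 0"
  shows "4*(1/s) - 3*((1-s)/(2*y)) = (1-s)/(2*y)*(2*(1/s) - 1)"
  using assms by (simp add: field_simps) algebra

lemma alg2:
  fixes s y x :: real
  assumes "s > 0" "s^2 = 1 - 4*y" "y \<noteq> 0"
  shows "x*(2*((1/s - 1)/y - ((1-s)/(2*y) - 1)/y)) = 2*x*(1/s)*((1-s)/(2*y))^2"
  using assms by (simp add: field_simps) algebra

lemma alg3:
  fixes s y x :: real
  assumes "s > 0" "s^2 = 1 - 4*y" "y = x^2" "x \<noteq> 0"
  shows "(1-s)/(2*y)*(2*(1/s) - 1) + 2*x*(1/s)*((1-s)/(2*y))^2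
     = 2 * ((1-s)/(2*y)) * (1 / (2 * x)) * ((1+2*x)/s - 1) - (1-s)/(2*y)"
  proof -
  have "x^8 = x*(x*x^6)" by (simp add: numeral_eq_Suc)
  then show ?thesis using assms by (simp add: field_simps) (simp add: algebra_simps power2_eq_square)
qed

lemma shift_series:
  fixes a :: "nat \<Rightarrow> real" and y S :: real
  assumes "(\<lambda>n. a n * y^n) sums S" "y \<noteq> 0"
  shows "(\<lambda>n. a (Suc n) * y^n) sums ((S - a 0)/y)"
proof -
  have "(\<lambda>n. a (Suc n) * y^(Suc n)) sums (S - a 0)"
    using sums_Suc_iff[of "\<lambda>n. a n * y^n" "S - a 0"] assms(1) by simp
  hence "(\<lambda>n. a (Suc n) * y^(Suc n) / y) sums ((S - a 0)/y)" by (rule sums_divide)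
  moreover have "(\<lambda>n. a (Suc n) * y^(Suc n) / y) = (\<lambda>n. a (Suc n) * y^n)"
    using assms(2) by auto
  ultimately show ?thesis by simp
qed

lemma even_odd_sums:
  assumes "(\<lambda>m. f (2*m)) sums A" "(\<lambda>m. f (2*m+1)) sums (B::real)"
  shows "f sums (A + B)"
proof -
  let ?e = "\<lambda>n. if even n then f n else 0"
  let ?o = "\<lambda>n. if odd n then f n else 0"
  have "(\<lambda>m. ?e (2*m)) sums A" using assms(1) by simp
  hence e: "?e sums A"
    by (subst (asm) sums_mono_reindex[of "\<lambda>n. 2*n"]) (auto simp: strict_mono_def elim!: evenE)
  have "(\<lambda>m. ?o (2*m+1)) sums B" using assms(2) by simp
  hence o: "?o sums B"
    by (subst (asm) sums_mono_reindex[of "\<lambda>n. 2*n+1"]) (auto simp: strict_mono_def elim!: oddE)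
  have "(\<lambda>n. ?e n + ?o n) sums (A + B)" using sums_add[OF e o] .
  moreover have "(\<lambda>n. ?e n + ?o n) = f" by auto
  ultimately show ?thesis by simp
qed

lemma gf_main:
  fixes T :: "nat \<Rightarrow> nat" and x :: real
  assumes Te: "\<And>m. real (T (2*m)) = 4*cb m - 3*(cb m/(real m+1))"
    and To: "\<And>m. real (T (2*m+1)) = 2*(cb (Suc m) - cb (Suc m)/(real (Suc m)+1))"
    and x: "0 < \<bar>x\<bar>" "\<bar>x\<bar> < 1/2"
  shows "(\<lambda>m. real (T (2 * m)) * x ^ (2 * m)) sums (Cgf (x\<^sup>2) * (2 * Bgf (x\<^sup>2) - 1))"
    and "(\<lambda>m. real (T (2 * m + 1)) * x ^ (2 * m + 1)) sums (2 * x * Bgf (x\<^sup>2) * (Cgf (x\<^sup>2))\<^sup>2)"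
    and "(\<lambda>n. real (T n) * x ^ n) sums
              (2 * Cgf (x\<^sup>2) * (1 / (2 * x)) * (sqrt ((1 + 2 * x) / (1 - 2 * x)) - 1) - Cgf (x\<^sup>2))"
proof -
  define y where "y = x^2"
  have y0: "0 < y" using x unfolding y_def by simp
  have y1: "y < 1/4"
  proof -
    have "\<bar>x\<bar>*\<bar>x\<bar> < (1/2)*(1/2)" using x by (intro mult_strict_mono) auto
    moreover have "y = \<bar>x\<bar>*\<bar>x\<bar>" unfolding y_def by (simp add: power2_eq_square)
    ultimately show ?thesis by simp
  qed
  define s where "s = sqrt (1 - 4*y)"
  have s0: "s > 0" using y1 unfolding s_def by simp
  have s2: "s^2 = 1 - 4*y" using y1 unfolding s_def by simp
  have Bs: "Bgf y = 1/s" unfolding Bgf_def s_def ..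
  have Cs: "Cgf y = (1-s)/(2*y)" unfolding Cgf_def s_def ..
  have yabs: "0 < \<bar>y\<bar>" "\<bar>y\<bar> < 1/4" using y0 y1 by auto
  note BS = B_series[OF yabs(2)] and CS = C_series[OF yabs]
  have pw: "x^(2*m) = y^m" for m unfolding y_def by (simp add: power_mult)
  have "(\<lambda>m. 4*(cb m * y^m) - 3*(cb m/(real m+1) * y^m)) sums (4*Bgf y - 3*Cgf y)"
    by (intro sums_diff sums_mult BS CS)
  moreover have "(\<lambda>m. 4*(cb m * y^m) - 3*(cb m/(real m+1) * y^m)) = (\<lambda>m. real (T (2 * m)) * x ^ (2 * m))"
    by (rule ext, simp only: Te pw, simp add: algebra_simps)
  moreover have "4*Bgf y - 3*Cgf y = Cgf y * (2 * Bgf y - 1)"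
    unfolding Bs Cs using alg1[OF s0 s2] y0 by simp
  ultimately have E: "(\<lambda>m. real (T (2 * m)) * x ^ (2 * m)) sums (Cgf y * (2 * Bgf y - 1))" by simp
  then show "(\<lambda>m. real (T (2 * m)) * x ^ (2 * m)) sums (Cgf (x\<^sup>2) * (2 * Bgf (x\<^sup>2) - 1))"
    unfolding y_def .
  have B1: "(\<lambda>m. cb (Suc m) * y^m) sums ((Bgf y - 1)/y)"
    using shift_series[of cb y, OF BS] y0 by (simp add: cb_def)
  have C1: "(\<lambda>m. cb (Suc m)/(real (Suc m)+1) * y^m) sums ((Cgf y - 1)/y)"
    using shift_series[of "\<lambda>n. cb n/(real n+1)" y, OF CS] y0 by (simp add: cb_def)
  have O1: "(\<lambda>m. x*(2*(cb (Suc m) * y^m - cb (Suc m)/(real (Suc m)+1) * y^m))) sums (x*(2*((Bgf y - 1)/y - (Cgf y - 1)/y)))"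
    by (intro sums_diff sums_mult B1 C1)
  have O2: "(\<lambda>m. x*(2*(cb (Suc m) * y^m - cb (Suc m)/(real (Suc m)+1) * y^m))) = (\<lambda>m. real (T (2 * m+1)) * x ^ (2 * m+1))"
    by (rule ext, simp only: To pw power_add power_one_right, simp add: algebra_simps)
  have O3: "x*(2*((Bgf y - 1)/y - (Cgf y - 1)/y)) = 2 * x * Bgf y * (Cgf y)\<^sup>2"
    unfolding Bs Cs using alg2[OF s0 s2] y0 by simp
  have O: "(\<lambda>m. real (T (2 * m+1)) * x ^ (2 * m+1)) sums (2 * x * Bgf y * (Cgf y)\<^sup>2)"
    using O1 unfolding O2 O3 .
  then show "(\<lambda>m. real (T (2 * m + 1)) * x ^ (2 * m + 1)) sums (2 * x * Bgf (x\<^sup>2) * (Cgf (x\<^sup>2))\<^sup>2)"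
    unfolding y_def .
  have "(\<lambda>n. real (T n) * x ^ n) sums (Cgf y * (2 * Bgf y - 1) + 2 * x * Bgf y * (Cgf y)\<^sup>2)"
    by (rule even_odd_sums[OF E O])
  moreover have "sqrt ((1 + 2 * x) / (1 - 2 * x)) = (1+2*x)/s"
  proof -
    have p: "1 + 2*x > 0" "1 - 2*x > 0" using x by auto
    have "((1+2*x)/s)^2 = (1+2*x)^2/((1-2*x)*(1+2*x))"
      using s2 unfolding y_def by (simp add: power_divide algebra_simps power2_eq_square)
    also have "\<dots> = (1 + 2 * x) / (1 - 2 * x)" using p by (simp add: power2_eq_square)
    finally have "sqrt ((1 + 2 * x) / (1 - 2 * x)) = sqrt (((1+2*x)/s)^2)" by simp
    also have "\<dots> = (1+2*x)/s" using p s0 by simp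
    finally show ?thesis .
  qed
  moreover have "Cgf y * (2 * Bgf y - 1) + 2 * x * Bgf y * (Cgf y)\<^sup>2
     = 2 * Cgf y * (1 / (2 * x)) * ((1+2*x)/s - 1) - Cgf y"
    unfolding Bs Cs using alg3[OF s0 s2 y_def] x by simp
  ultimately show "(\<lambda>n. real (T n) * x ^ n) sums
              (2 * Cgf (x\<^sup>2) * (1 / (2 * x)) * (sqrt ((1 + 2 * x) / (1 - 2 * x)) - 1) - Cgf (x\<^sup>2))"
    unfolding y_def by simp
qed



lemma height_0[simp]: "height p 0 = 0" by (simp add: height_def)

lemma height_Suc: "height p (Suc k) = height p k + step_val (p ! k)"
  by (simp add: height_def)

lemma height_append1: "k \<le> length q \<Longrightarrow> height (q @ r) k = height q k"
  unfolding height_def by (intro sum.cong) (auto simp: nth_append)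

lemma height_snoc_last: "height (q @ [b]) (Suc (length q)) = height q (length q) + step_val b"
  by (simp add: height_Suc height_append1)

definition nonneg :: "bool list \<Rightarrow> bool" where
  "nonneg q \<longleftrightarrow> (\<forall>k\<le>length q. height q k \<ge> 0)"

definition Qs :: "nat \<Rightarrow> bool list set" where
  "Qs n = {q. length q = n \<and> nonneg q}"

definition Ps :: "nat \<Rightarrow> int \<Rightarrow> bool list set" where
  "Ps n h = {q \<in> Qs n. height q n = h}"

definition zc :: "bool list \<Rightarrow> nat" where
  "zc q = card {k. k \<le> length q \<and> height q k = 0}"

lemma finite_Qs[simp]: "finite (Qs n)"
proof -
  have "Qs n \<subseteq> {xs. set xs \<subseteq> UNIV \<and> length xs = n}" unfolding Qs_def by auto
  moreover have "finite {xs. set xs \<subseteq> (UNIV::bool set) \<and> length xs = n}"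
    by (rule finite_lists_length_eq) simp
  ultimately show ?thesis by (rule finite_subset)
qed

lemma finite_Ps[simp]: "finite (Ps n h)"
  unfolding Ps_def by simp

lemma nonneg_snoc: "nonneg (q @ [b]) \<longleftrightarrow> nonneg q \<and> height q (length q) + step_val b \<ge> 0"
proof -
  have "(\<forall>k\<le>Suc (length q). height (q@[b]) k \<ge> 0) \<longleftrightarrow>
        (\<forall>k\<le>length q. height (q@[b]) k \<ge> 0) \<and> height (q@[b]) (Suc (length q)) \<ge> 0"
    by (auto simp: le_Suc_eq)
  then show ?thesis unfolding nonneg_def
    by (simp add: height_append1 height_snoc_last)
qed

lemma snoc_cases: "length p = Suc n \<Longrightarrow> \<exists>q b. p = q @ [b] \<and> length q = n"
  by (metis append_butlast_last_id length_butlast length_greater_0_conv diff_Suc_1 zero_less_Suc)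

lemma Qs_Suc: "Qs (Suc n) = (\<lambda>q. q @ [True]) ` Qs n \<union> (\<lambda>q. q @ [False]) ` {q \<in> Qs n. height q n \<ge> 1}"
proof (rule set_eqI)
  fix p
  show "p \<in> Qs (Suc n) \<longleftrightarrow> p \<in> (\<lambda>q. q @ [True]) ` Qs n \<union> (\<lambda>q. q @ [False]) ` {q \<in> Qs n. height q n \<ge> 1}"
  proof
    assume "p \<in> Qs (Suc n)"
    then have l: "length p = Suc n" and nn: "nonneg p" by (auto simp: Qs_def)
    from snoc_cases[OF l] obtain q b where p: "p = q @ [b]" and lq: "length q = n" by blast
    from nn have "nonneg q" "height q n + step_val b \<ge> 0" unfolding p nonneg_snoc lq by auto
    then show "p \<in> (\<lambda>q. q @ [True]) ` Qs n \<union> (\<lambda>q. q @ [False]) ` {q \<in> Qs n. height q n \<ge> 1}"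
      using lq unfolding p by (cases b) (auto simp: Qs_def step_val_def)
  next
    assume "p \<in> (\<lambda>q. q @ [True]) ` Qs n \<union> (\<lambda>q. q @ [False]) ` {q \<in> Qs n. height q n \<ge> 1}"
    then show "p \<in> Qs (Suc n)"
    proof
      assume "p \<in> (\<lambda>q. q @ [True]) ` Qs n"
      then obtain q where "q \<in> Qs n" "p = q @ [True]" by blast
      then show ?thesis unfolding Qs_def using nonneg_snoc[of q True]
        by (auto simp: step_val_def nonneg_def)
    next
      assume "p \<in> (\<lambda>q. q @ [False]) ` {q \<in> Qs n. height q n \<ge> 1}"
      then obtain q where "q \<in> Qs n" "height q n \<ge> 1" "p = q @ [False]" by blast
      then show ?thesis unfolding Qs_def using nonneg_snoc[of q False]
        by (auto simp: step_val_def)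
    qed
  qed
qed

lemma Ps_neg: "h < 0 \<Longrightarrow> Ps n h = {}"
  unfolding Ps_def Qs_def nonneg_def by force

lemma height_snoc_n: "length q = n \<Longrightarrow> height (q @ [b]) (Suc n) = height q n + step_val b"
  using height_snoc_last by blast

lemma Ps_Suc: "h \<ge> 0 \<Longrightarrow> Ps (Suc n) h = (\<lambda>q. q @ [True]) ` Ps n (h-1) \<union> (\<lambda>q. q @ [False]) ` Ps n (h+1)"
proof (rule set_eqI)
  fix p assume h: "h \<ge> 0"
  show "p \<in> Ps (Suc n) h \<longleftrightarrow> p \<in> (\<lambda>q. q @ [True]) ` Ps n (h-1) \<union> (\<lambda>q. q @ [False]) ` Ps n (h+1)"
  proof
    assume "p \<in> Ps (Suc n) h"
    then have p1: "p \<in> Qs (Suc n)" and p2: "height p (Suc n) = h" unfolding Ps_def by auto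
    from p1[unfolded Qs_Suc] show "p \<in> (\<lambda>q. q @ [True]) ` Ps n (h-1) \<union> (\<lambda>q. q @ [False]) ` Ps n (h+1)"
    proof
      assume "p \<in> (\<lambda>q. q @ [True]) ` Qs n"
      then obtain q where q: "q \<in> Qs n" "p = q @ [True]" by blast
      then have "height q n = h - 1" using p2 height_snoc_n[of q n True] by (auto simp: Qs_def step_val_def)
      then show ?thesis using q by (auto simp: Ps_def)
    next
      assume "p \<in> (\<lambda>q. q @ [False]) ` {q \<in> Qs n. height q n \<ge> 1}"
      then obtain q where q: "q \<in> Qs n" "p = q @ [False]" by blast
      then have "height q n = h + 1" using p2 height_snoc_n[of q n False] by (auto simp: Qs_def step_val_def)
      then show ?thesis using q by (auto simp: Ps_def)
    qed
  next
    assume "p \<in> (\<lambda>q. q @ [True]) ` Ps n (h-1) \<union> (\<lambda>q. q @ [False]) ` Ps n (h+1)"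
    then show "p \<in> Ps (Suc n) h"
    proof
      assume "p \<in> (\<lambda>q. q @ [True]) ` Ps n (h-1)"
      then obtain q where q: "q \<in> Qs n" "height q n = h - 1" "p = q @ [True]" by (auto simp: Ps_def)
      then have "p \<in> Qs (Suc n)" unfolding Qs_Suc by blast
      moreover have "height p (Suc n) = h" using q height_snoc_n[of q n True] by (auto simp: Qs_def step_val_def)
      ultimately show ?thesis by (simp add: Ps_def)
    next
      assume "p \<in> (\<lambda>q. q @ [False]) ` Ps n (h+1)"
      then obtain q where q: "q \<in> Qs n" "height q n = h + 1" "p = q @ [False]" by (auto simp: Ps_def)
      then have "p \<in> Qs (Suc n)" unfolding Qs_Suc using h by force
      moreover have "height p (Suc n) = h" using q height_snoc_n[of q n False] by (auto simp: Qs_def step_val_def)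
      ultimately show ?thesis by (simp add: Ps_def)
    qed
  qed
qed

fun ballot :: "nat \<Rightarrow> int \<Rightarrow> nat" where
  "ballot 0 h = (if h = 0 then 1 else 0)"
| "ballot (Suc n) h = (if h < 0 then 0 else ballot n (h-1) + ballot n (h+1))"

lemma ballot_neg: "h < 0 \<Longrightarrow> ballot n h = 0"
  by (cases n) auto

lemma Qs_0: "Qs 0 = {[]}" by (auto simp: Qs_def nonneg_def)

lemma Ps_0: "Ps 0 h = (if h = 0 then {[]} else {})" by (auto simp: Ps_def Qs_0)

lemma disj_TF: "(\<lambda>q. q @ [True]) ` A \<inter> (\<lambda>q. q @ [False]) ` B = {}" by auto

lemma inj_snoc: "inj_on (\<lambda>q. q @ [b]) A" by (auto simp: inj_on_def)

lemma card_Ps: "card (Ps n h) = ballot n h"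
proof (induction n arbitrary: h)
  case 0 then show ?case by (simp add: Ps_0)
next
  case (Suc n)
  show ?case
  proof (cases "h < 0")
    case True then show ?thesis by (simp add: Ps_neg)
  next
    case False
    then have "card (Ps (Suc n) h) = card ((\<lambda>q. q @ [True]) ` Ps n (h-1)) + card ((\<lambda>q. q @ [False]) ` Ps n (h+1))"
      unfolding Ps_Suc[OF leI[OF False]] by (intro card_Un_disjoint) (auto)
    also have "\<dots> = ballot n (h-1) + ballot n (h+1)"
      by (simp add: card_image[OF inj_snoc] Suc.IH)
    finally show ?thesis using False by simp
  qed
qed

lemma zc_snoc: "length q = n \<Longrightarrow> zc (q @ [b]) = zc q + (if height q n + step_val b = 0 then 1 else 0)"
proof -
  assume l: "length q = n"
  have "{k. k \<le> length (q @ [b]) \<and> height (q@[b]) k = 0}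
      = {k. k \<le> n \<and> height q k = 0} \<union> (if height q n + step_val b = 0 then {Suc n} else {})"
    using l by (auto simp: le_Suc_eq height_append1 height_snoc_n split: if_splits)
  moreover have "finite {k. k \<le> n \<and> height q k = 0}" by simp
  moreover have "Suc n \<notin> {k. k \<le> n \<and> height q k = 0}" by simp
  ultimately show ?thesis unfolding zc_def using l by auto
qed

definition Wf :: "nat \<Rightarrow> int \<Rightarrow> nat" where "Wf n h = (\<Sum>q\<in>Ps n h. zc q)"

lemma sum_snoc:
  assumes "\<And>q. q \<in> A \<Longrightarrow> zc (q @ [b]) = zc q + c" "finite A"
  shows "(\<Sum>q\<in>(\<lambda>q. q @ [b]) ` A. zc q) = (\<Sum>q\<in>A. zc q) + c * card A"
proof -
  have "(\<Sum>q\<in>(\<lambda>q. q @ [b]) ` A. zc q) = (\<Sum>q\<in>A. zc (q @ [b]))"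
    by (rule sum.reindex[OF inj_snoc, unfolded comp_def])
  also have "\<dots> = (\<Sum>q\<in>A. zc q + c)" using assms(1) by (rule sum.cong[OF refl])
  also have "\<dots> = (\<Sum>q\<in>A. zc q) + c * card A" by (simp add: sum.distrib)
  finally show ?thesis .
qed

lemma W_rec: "h \<ge> 0 \<Longrightarrow> Wf (Suc n) h = Wf n (h-1) + Wf n (h+1) + (if h = 0 then ballot (Suc n) 0 else 0)"
proof -
  assume h: "h \<ge> 0"
  let ?c = "if h = 0 then 1 else 0 :: nat"
  have "Wf (Suc n) h = (\<Sum>q\<in>(\<lambda>q. q @ [True]) ` Ps n (h-1). zc q) + (\<Sum>q\<in>(\<lambda>q. q @ [False]) ` Ps n (h+1). zc q)"
    unfolding Wf_def Ps_Suc[OF h] by (intro sum.union_disjoint) auto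
  also have "(\<Sum>q\<in>(\<lambda>q. q @ [True]) ` Ps n (h-1). zc q) = Wf n (h-1) + ?c * card (Ps n (h-1))"
    unfolding Wf_def by (rule sum_snoc[OF _ finite_Ps]) (auto simp: Ps_def Qs_def zc_snoc step_val_def)
  also have "(\<Sum>q\<in>(\<lambda>q. q @ [False]) ` Ps n (h+1). zc q) = Wf n (h+1) + ?c * card (Ps n (h+1))"
    unfolding Wf_def by (rule sum_snoc[OF _ finite_Ps]) (auto simp: Ps_def Qs_def zc_snoc step_val_def)
  finally show ?thesis using h by (simp add: card_Ps)
qed

lemma W_neg: "h < 0 \<Longrightarrow> Wf n h = 0" by (simp add: Wf_def Ps_neg)

lemma W_closed: "h \<ge> 0 \<Longrightarrow> Wf n h = ballot (Suc n) (h+1)"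
proof (induction n arbitrary: h)
  case 0
  have "{k. k \<le> length ([]::bool list) \<and> height [] k = 0} = {0::nat}" by auto
  then have "zc [] = 1" by (simp add: zc_def)
  then show ?case using 0 by (simp add: Wf_def Ps_0)
next
  case (Suc n)
  show ?case
  proof (cases "h = 0")
    case True
    then show ?thesis using W_rec[of 0 n] Suc.IH[of 1] by (simp add: W_neg)
  next
    case False
    then have "h - 1 \<ge> 0" using Suc.prems by simp
    then show ?thesis using W_rec[OF Suc.prems, of n] Suc.IH[of "h-1"] Suc.IH[of "h+1"] Suc.prems False
      by (simp add: algebra_simps)
  qed
qed

definition An :: "nat \<Rightarrow> nat" where "An n = card (Qs n)"
definition Zs :: "nat \<Rightarrow> nat" where "Zs n = (\<Sum>q\<in>Qs n. zc q)"

lemma Qs_pos: "{q \<in> Qs n. height q n \<ge> 1} = Qs n - Ps n 0"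
  by (auto simp: Ps_def Qs_def nonneg_def)

lemma Ps_sub: "Ps n h \<subseteq> Qs n" by (auto simp: Ps_def)

lemma A_rec: "An (Suc n) + ballot n 0 = 2 * An n"
proof -
  have "An (Suc n) = card ((\<lambda>q. q @ [True]) ` Qs n) + card ((\<lambda>q. q @ [False]) ` (Qs n - Ps n 0))"
    unfolding An_def Qs_Suc Qs_pos by (intro card_Un_disjoint) auto
  also have "\<dots> = card (Qs n) + card (Qs n - Ps n 0)"
    by (simp add: card_image[OF inj_snoc])
  also have "card (Qs n - Ps n 0) = card (Qs n) - card (Ps n 0)"
    by (rule card_Diff_subset[OF finite_Ps Ps_sub])
  finally show ?thesis using card_mono[OF finite_Qs Ps_sub[of n 0]] by (simp add: An_def card_Ps)
qed

lemma Z_rec: "Zs (Suc n) + Wf n 0 = 2 * Zs n + ballot n 1"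
proof -
  let ?S = "Qs n - Ps n 0"
  have "Zs (Suc n) = (\<Sum>q\<in>(\<lambda>q. q @ [True]) ` Qs n. zc q) + (\<Sum>q\<in>(\<lambda>q. q @ [False]) ` ?S. zc q)"
    unfolding Zs_def Qs_Suc Qs_pos by (intro sum.union_disjoint) auto
  also have "(\<Sum>q\<in>(\<lambda>q. q @ [True]) ` Qs n. zc q) = Zs n + 0 * card (Qs n)"
    unfolding Zs_def by (rule sum_snoc[OF _ finite_Qs]) 
      (auto simp: Qs_def zc_snoc step_val_def nonneg_def)
  also have "(\<Sum>q\<in>(\<lambda>q. q @ [False]) ` ?S. zc q) = (\<Sum>q\<in>?S. zc (q @ [False]))"
    by (rule sum.reindex[OF inj_snoc, unfolded comp_def])
  also have "\<dots> = (\<Sum>q\<in>?S. zc q + of_bool (height q n = 1))"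
    by (intro sum.cong refl) (auto simp: Qs_def zc_snoc step_val_def)
  also have "\<dots> = (\<Sum>q\<in>?S. zc q) + card (?S \<inter> {q. height q n = 1})"
    by (simp add: sum.distrib)
  also have "?S \<inter> {q. height q n = 1} = Ps n 1" by (auto simp: Ps_def)
  also have "(\<Sum>q\<in>?S. zc q) = Zs n - Wf n 0"
    unfolding Zs_def Wf_def by (rule sum_diff_nat[OF finite_Ps Ps_sub])
  finally have "Zs (Suc n) = Zs n + (Zs n - Wf n 0 + ballot n 1)" by (simp add: card_Ps)
  moreover have "Wf n 0 \<le> Zs n"
    unfolding Zs_def Wf_def by (rule sum_mono2[OF finite_Qs Ps_sub]) simp
  ultimately show ?thesis by simp
qed

lemma ballot_gt: "h > int n \<Longrightarrow> ballot n h = 0"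
  by (induction n arbitrary: h) auto

lemma ballot_parity: "odd (int n + h) \<Longrightarrow> ballot n h = 0"
proof (induction n arbitrary: h)
  case 0 then show ?case by auto
next
  case (Suc n)
  have "odd (int n + (h - 1))" "odd (int n + (h + 1))" using Suc.prems by (simp_all add: algebra_simps)
  then show ?case using Suc.IH by simp
qed

definition bc :: "nat \<Rightarrow> nat \<Rightarrow> int" where
  "bc n d = int (n choose d) - (if d = 0 then 0 else int (n choose (d-1)))"

lemma bc_pascal: "d \<ge> 1 \<Longrightarrow> bc (Suc n) d = bc n d + bc n (d-1)"
proof -
  assume d: "d \<ge> 1"
  then obtain e where e: "d = Suc e" by (cases d) auto
  show ?thesis
  proof (cases e)
    case 0 then show ?thesis using e by (simp add: bc_def)
  next
    case (Suc f) then show ?thesis using e by (simp add: bc_def)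
  qed
qed

lemma bc_zero: "d \<ge> 1 \<Longrightarrow> bc (2*d-1) d = 0"
proof -
  assume d: "d \<ge> 1"
  have "(2*d-1) choose d = (2*d-1) choose ((2*d-1) - d)"
    using d by (intro binomial_symmetric) simp
  also have "(2*d-1) - d = d - 1" by simp
  finally show ?thesis using d by (simp add: bc_def)
qed

lemma ballot_closed: "2*d \<le> n+1 \<Longrightarrow> int (ballot n (int n - 2*int d)) = bc n d"
proof (induction n arbitrary: d)
  case 0
  then have "d = 0" by simp
  then show ?case by (simp add: bc_def)
next
  case (Suc n)
  show ?case
  proof (cases "2*d = n+2")
    case True
    then have "int (Suc n) - 2*int d = -1" by simp
    moreover have "d \<ge> 1" "Suc n = 2*d-1" using True by auto
    ultimately show ?thesis using bc_zero[of d] ballot_neg[of "-1" "Suc n"] by simp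
  next
    case False
    then have d: "2*d \<le> n+1" using Suc.prems by simp
    have h: "\<not> (int (Suc n) - 2*int d < 0)" using d by simp
    have r: "ballot (Suc n) (int (Suc n) - 2*int d) = ballot n (int n - 2*int d) + ballot n (int n - 2*int d + 2)"
      using h by (simp add: algebra_simps)
    show ?thesis
    proof (cases "d = 0")
      case True
      then show ?thesis using r Suc.IH[of 0] ballot_gt[of n "int n + 2"] by (simp add: bc_def)
    next
      case False
      then have e: "int n - 2*int d + 2 = int n - 2*int (d-1)" by simp
      have i2: "int (ballot n (int n - 2*int (d-1))) = bc n (d-1)" using Suc.IH[of "d-1"] d by simp
      show ?thesis unfolding r e using Suc.IH[OF d] i2 False bc_pascal[of d n] by simp
    qed
  qed
qed

definition rc :: "bool list \<Rightarrow> bool list" where "rc q = map Not (rev q)"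

lemma step_val_Not: "step_val (\<not> b) = - step_val b" by (simp add: step_val_def)

lemma len_rc[simp]: "length (rc q) = length q" by (simp add: rc_def)

lemma rc_nth: "j < length q \<Longrightarrow> rc q ! j = (\<not> q ! (length q - Suc j))"
  by (simp add: rc_def rev_nth)

lemma S2: "length q = n \<Longrightarrow> j \<le> n \<Longrightarrow> height (q @ rc q) (n + j) = height q (n - j)"
proof (induction j)
  case 0 then show ?case by (simp add: height_append1)
next
  case (Suc j)
  have "height (q @ rc q) (n + Suc j) = height (q @ rc q) (n + j) + step_val ((q @ rc q) ! (n + j))"
    by (simp add: height_Suc)
  also have "(q @ rc q) ! (n + j) = (\<not> q ! (n - Suc j))" using Suc.prems by (simp add: nth_append rc_nth)
  also have "height (q @ rc q) (n + j) = height q (n - j)" using Suc by simp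
  also have "n - j = Suc (n - Suc j)" using Suc.prems by simp
  finally show ?case by (simp add: height_Suc step_val_Not)
qed

lemma S2': "length q = n \<Longrightarrow> n \<le> k \<Longrightarrow> k \<le> 2*n \<Longrightarrow> height (q @ rc q) k = height q (2*n - k)"
proof -
  assume a: "length q = n" "n \<le> k" "k \<le> 2*n"
  have "n + (k - n) = k" "n - (k - n) = 2*n - k" using a by auto
  then show ?thesis using S2[of q n "k - n"] a by simp
qed

lemma sym_nth: "length q = n \<Longrightarrow> i < 2*n \<Longrightarrow> ((q @ rc q) ! i) = (\<not> (q @ rc q) ! (2*n - 1 - i))"
proof -
  assume a: "length q = n" "i < 2*n"
  show ?thesis
  proof (cases "i < n")
    case True
    then show ?thesis using a by (auto simp: nth_append rc_nth)
  next
    case False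
    have idx: "n - Suc (i - n) = 2*n - 1 - i" using False a by simp
    have "(q @ rc q) ! i = rc q ! (i - n)" using a False by (simp add: nth_append)
    also have "\<dots> = (\<not> q ! (n - Suc (i - n)))" using a False by (simp add: rc_nth)
    finally have "(q @ rc q) ! i = (\<not> q ! (2*n - 1 - i))" unfolding idx .
    moreover have "(q @ rc q) ! (2*n - 1 - i) = q ! (2*n - 1 - i)" using a False by (auto simp: nth_append)
    ultimately show ?thesis by simp
  qed
qed

lemma sym_eq: "sym_dyck_paths n = (\<lambda>q. q @ rc q) ` Qs n"
proof (rule set_eqI)
  fix p
  show "p \<in> sym_dyck_paths n \<longleftrightarrow> p \<in> (\<lambda>q. q @ rc q) ` Qs n"
  proof
    assume p: "p \<in> sym_dyck_paths n"
    then have l: "length p = 2*n" and nn: "\<forall>k\<le>2*n. height p k \<ge> 0"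
      and sy: "\<forall>i<2*n. p ! i \<longleftrightarrow> \<not> p ! (2*n - 1 - i)"
    proof -
      from p have "dyck_path n p" "symmetric_path n p" unfolding sym_dyck_paths_def by simp_all
      then show "length p = 2*n" "\<forall>k\<le>2*n. height p k \<ge> 0" "\<forall>i<2*n. p ! i \<longleftrightarrow> \<not> p ! (2*n - 1 - i)"
        unfolding dyck_path_def symmetric_path_def by blast+
    qed
    define q where "q = take n p"
    have lq: "length q = n" using l by (simp add: q_def)
    have dr: "drop n p = rc q"
    proof (rule nth_equalityI)
      show "length (drop n p) = length (rc q)" using l lq by simp
      fix j assume "j < length (drop n p)"
      then have j: "j < n" using l by simp
      have "drop n p ! j = p ! (n + j)" using l j by simp
      also have "\<dots> = (\<not> p ! (2*n - 1 - (n + j)))"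
      proof -
        have "n + j < 2*n" using j by simp
        with sy show ?thesis by blast
      qed
      also have "2*n - 1 - (n+j) = n - Suc j" by simp
      also have "p ! (n - Suc j) = q ! (n - Suc j)" using j by (simp add: q_def)
      finally show "drop n p ! j = rc q ! j" using j lq by (simp add: rc_nth)
    qed
    have pe: "p = q @ rc q" using dr by (metis append_take_drop_id q_def)
    have "nonneg q" unfolding nonneg_def
    proof (intro allI impI)
      fix k assume "k \<le> length q"
      then have "height p k = height q k" unfolding pe by (simp add: height_append1)
      moreover have "k \<le> 2*n" using \<open>k \<le> length q\<close> lq by simp
      ultimately show "height q k \<ge> 0" using nn by force
    qed
    then show "p \<in> (\<lambda>q. q @ rc q) ` Qs n" using pe lq by (auto simp: Qs_def)
  next
    assume "p \<in> (\<lambda>q. q @ rc q) ` Qs n"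
    then obtain q where q: "q \<in> Qs n" and pe: "p = q @ rc q" by blast
    from q have lq: "length q = n" and nn: "nonneg q" by (auto simp: Qs_def)
    have hk: "height p k \<ge> 0" if "k \<le> 2*n" for k
    proof (cases "k \<le> n")
      case True then show ?thesis using nn lq unfolding pe nonneg_def by (simp add: height_append1)
    next
      case False then show ?thesis using nn lq that unfolding pe nonneg_def by (simp add: S2')
    qed
    have "height p (2*n) = 0" unfolding pe using S2'[OF lq, of "2*n"] by simp
    moreover have "length p = 2*n" unfolding pe using lq by simp
    moreover have "\<forall>i<2*n. p ! i \<longleftrightarrow> \<not> p ! (2*n - 1 - i)" unfolding pe using sym_nth[OF lq] by blast
    ultimately have "dyck_path n p" "symmetric_path n p" using hk
      unfolding dyck_path_def symmetric_path_def by blast+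
    then show "p \<in> sym_dyck_paths n" unfolding sym_dyck_paths_def by simp
  qed
qed

lemma inj_rc: "inj_on (\<lambda>q. q @ rc q) (Qs n)"
proof (rule inj_onI)
  fix x y assume "x \<in> Qs n" "y \<in> Qs n" "x @ rc x = y @ rc y"
  then have "length x = n" "length y = n" "x @ rc x = y @ rc y" by (simp_all add: Qs_def)
  then have "take n (x @ rc x) = x" "take n (y @ rc y) = y" "take n (x @ rc x) = take n (y @ rc y)" by simp_all
  then show "x = y" by simp
qed

lemma d_An: "d_seq n = An n"
  unfolding d_seq_def An_def sym_eq by (rule card_image[OF inj_rc])

lemma axis_q: assumes q: "q \<in> Qs n"
  shows "axis_points n (q @ rc q) + (if height q n = 0 then 1 else 0) = 2 * zc q"
proof -
  from q have lq: "length q = n" by (simp add: Qs_def)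
  define Z where "Z = {k. k \<le> n \<and> height q k = 0}"
  have fZ: "finite Z" unfolding Z_def by simp
  have set: "{k. k \<le> 2*n \<and> height (q @ rc q) k = 0} = Z \<union> (\<lambda>k. 2*n - k) ` Z"
  proof (rule set_eqI)
    fix k
    show "k \<in> {k. k \<le> 2*n \<and> height (q @ rc q) k = 0} \<longleftrightarrow> k \<in> Z \<union> (\<lambda>k. 2*n - k) ` Z"
    proof (cases "k \<le> n")
      case True
      have aux: "x = length q \<and> 2*length q - x = length q" if "x \<le> length q" "2*length q - x \<le> length q" for x using that by auto
      from True show ?thesis using lq unfolding Z_def
        by (auto simp: height_append1 S2' dest: aux)
    next
      case False
      show ?thesis
      proof
        assume "k \<in> {k. k \<le> 2*n \<and> height (q @ rc q) k = 0}"
        then have "k \<le> 2*n" "height q (2*n - k) = 0" using False lq by (auto simp: S2')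
        then show "k \<in> Z \<union> (\<lambda>k. 2*n - k) ` Z" unfolding Z_def
          using False by (intro UnI2 image_eqI[of _ _ "2*n - k"]) auto
      next
        assume "k \<in> Z \<union> (\<lambda>k. 2*n - k) ` Z"
        then obtain k' where "k' \<le> n" "height q k' = 0" "k = 2*n - k'" using False unfolding Z_def by auto
        then show "k \<in> {k. k \<le> 2*n \<and> height (q @ rc q) k = 0}" using False lq by (auto simp: S2')
      qed
    qed
  qed
  have inj: "inj_on (\<lambda>k. 2*n - k) Z" unfolding Z_def by (auto simp: inj_on_def)
  have int: "Z \<inter> (\<lambda>k. 2*n - k) ` Z = (if height q n = 0 then {n} else {})"
  proof -
    have a1: "k = n" if "2 * n - k \<le> n" "k \<le> n" for k using that by auto
    have a2: "\<exists>x\<le>n. height q x = 0 \<and> n = 2 * n - x" if "height q n = 0"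
      using that by (intro exI[of _ n]) auto
    show ?thesis unfolding Z_def by (auto simp: image_iff dest: a1 a2)
  qed
  have "axis_points n (q @ rc q) + card (Z \<inter> (\<lambda>k. 2*n - k) ` Z) = card Z + card ((\<lambda>k. 2*n - k) ` Z)"
    unfolding axis_points_def set by (rule card_Un_Int[symmetric]) (use fZ in auto)
  moreover have "zc q = card Z" unfolding zc_def Z_def lq ..
  ultimately show ?thesis using card_image[OF inj] int by (simp split: if_splits)
qed

lemma T_Zs: "T_seq n + ballot n 0 = 2 * Zs n"
proof -
  have "T_seq n = (\<Sum>q\<in>Qs n. axis_points n (q @ rc q))"
    unfolding T_seq_def sym_eq by (rule sum.reindex[OF inj_rc, unfolded comp_def])
  moreover have "ballot n 0 = (\<Sum>q\<in>Qs n. of_bool (height q n = 0))"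
    by (simp add: card_Ps[symmetric] Ps_def Int_def)
  ultimately have "T_seq n + ballot n 0 = (\<Sum>q\<in>Qs n. axis_points n (q @ rc q) + of_bool (height q n = 0))"
    by (simp add: sum.distrib)
  also have "\<dots> = (\<Sum>q\<in>Qs n. 2 * zc q)"
  proof (rule sum.cong[OF refl])
    fix q assume "q \<in> Qs n"
    from axis_q[OF this] show "axis_points n (q @ rc q) + of_bool (height q n = 0) = 2 * zc q"
      by (simp add: of_bool_def)
  qed
  finally show ?thesis by (simp add: Zs_def sum_distrib_left)
qed



declare ballot.simps(2)[simp del]

lemma ballot_Suc0: "ballot (Suc n) 0 = ballot n 1"
  by (simp add: ballot_neg ballot.simps(2))

lemma e_even: "real (ballot (2*m) 0) = cb m / (real m + 1)"
proof -
  have "int (ballot (2*m) (int (2*m) - 2*int m)) = bc (2*m) m" by (rule ballot_closed) simp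
  then have i: "int (ballot (2*m) 0) = bc (2*m) m" by simp
  show ?thesis
  proof (cases m)
    case 0 then show ?thesis using i by (simp add: bc_def cb_def)
  next
    case (Suc k)
    have t: "2*Suc k = Suc (k + Suc k)" by simp
    have "Suc k * ((2*Suc k) choose Suc k) = Suc (Suc k) * ((2*Suc k) choose k)"
      unfolding t by (rule Suc_times_binomial_add)
    then have "real (Suc k * ((2*Suc k) choose Suc k)) = real (Suc (Suc k) * ((2*Suc k) choose k))"
      by (simp only:)
    then have "real (Suc k) * real ((2*Suc k) choose Suc k) = real (Suc (Suc k)) * real ((2*Suc k) choose k)"
      by (simp only: of_nat_mult)
    then have r: "real m * cb m = (real m + 1) * real ((2*m) choose (m-1))"
      unfolding cb_def Suc by (simp only: diff_Suc_1 of_nat_Suc add.commute)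
    have "real (ballot (2*m) 0) = cb m - real ((2*m) choose (m-1))"
      using i Suc by (simp add: bc_def cb_def)
    also have "real ((2*m) choose (m-1)) = real m * cb m / (real m + 1)"
      using r by (simp add: field_simps)
    finally show ?thesis by (simp add: field_simps)
  qed
qed

lemma e_odd: "ballot (2*m+1) 0 = 0"
  by (rule ballot_parity) simp

lemma An0: "An 0 = 1" by (simp add: An_def Qs_0)

lemma Zs0: "Zs 0 = 1"
proof -
  have "{k. k \<le> length ([]::bool list) \<and> height [] k = 0} = {0::nat}" by auto
  then show ?thesis by (simp add: Zs_def Qs_0 zc_def)
qed

lemma a_rec: "real (An (Suc n)) = 2 * real (An n) - real (ballot n 0)"
  using A_rec[of n] by (simp add: algebra_simps flip: of_nat_add of_nat_mult)

lemma z_rec: "real (Zs (Suc n)) = 2 * real (Zs n) + real (ballot (Suc n) 0) - real (ballot (Suc (Suc n)) 0)"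
proof -
  have "Zs (Suc n) + ballot (Suc (Suc n)) 0 = 2 * Zs n + ballot (Suc n) 0"
    using Z_rec[of n] W_closed[of 0 n] by (simp del: ballot.simps add: ballot_Suc0)
  then show ?thesis by (simp add: algebra_simps flip: of_nat_add of_nat_mult)
qed

lemma z_closed: "real (Zs n) = real (An (Suc n)) - real (ballot (Suc n) 0)"
proof (induction n)
  case 0 then show ?case using a_rec[of 0] by (simp add: Zs0 An0 ballot.simps(2))
next
  case (Suc n) then show ?case using z_rec[of n] a_rec[of "Suc n"] by simp
qed

lemma T_real: "real (T_seq n) = 2 * real (Zs n) - real (ballot n 0)"
  using T_Zs[of n] by (simp add: algebra_simps flip: of_nat_add of_nat_mult)

lemma a_closed: "real (An (2*m)) = cb m \<and> real (An (2*m+1)) = 2 * cb m - cb m / (real m + 1)"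
proof (induction m)
  case 0 then show ?case using a_rec[of 0] by (simp add: An0 cb_def)
next
  case (Suc m)
  have e1: "An (2 * Suc m) = An (Suc (2*m+1))" by simp
  have A2: "real (An (2 * Suc m)) = cb (Suc m)"
  proof -
    have c: "cb (Suc m) = 2*(2*real m+1)*cb m/(real m+1)" using cb_Suc[of m] by (simp add: eq_divide_eq)
    show ?thesis unfolding e1 a_rec c using Suc.IH e_odd[of m] by (simp del: ballot.simps add: field_simps)
  qed
  have e2: "2 * Suc m + 1 = Suc (2 * Suc m)" by simp
  have "real (An (2 * Suc m + 1)) = 2 * cb (Suc m) - cb (Suc m) / (real (Suc m) + 1)"
    unfolding e2 a_rec A2 e_even by simp
  then show ?case using A2 by simp
qed

lemma cb_pos: "cb m > 0" by (simp add: cb_def)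

lemma Te: "real (T_seq (2*m)) = 4*cb m - 3*(cb m/(real m+1))"
proof -
  have e: "Suc (2*m) = 2*m+1" by simp
  have 2: "real (Zs (2*m)) = real (An (2*m+1)) - real (ballot (2*m+1) 0)"
    using z_closed[of "2*m"] unfolding e .
  have 3: "real (An (2*m+1)) = 2 * cb m - cb m / (real m + 1)" using a_closed[of m] by blast
  have 4: "real (ballot (2*m+1) 0) = 0" using e_odd[of m] by (simp only: of_nat_0)
  show ?thesis unfolding T_real 2 3 4 e_even[of m] by (simp add: algebra_simps)
qed

lemma To: "real (T_seq (2*m+1)) = 2*(cb (Suc m) - cb (Suc m)/(real (Suc m)+1))"
proof -
  have e: "Suc (2*m+1) = 2 * Suc m" by simp
  have 2: "real (Zs (2*m+1)) = real (An (2*Suc m)) - real (ballot (2*Suc m) 0)"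
    using z_closed[of "2*m+1"] unfolding e .
  have 3: "real (An (2*Suc m)) = cb (Suc m)" using a_closed[of "Suc m"] by blast
  have 4: "real (ballot (2*m+1) 0) = 0" using e_odd[of m] by (simp only: of_nat_0)
  show ?thesis unfolding T_real 2 3 4 e_even[of "Suc m"] by simp
qed

lemma d_even: "real (d_seq (2*m)) = cb m" using a_closed d_An by simp
lemma d_odd: "real (d_seq (2*m+1)) = 2 * cb m - cb m / (real m + 1)" using a_closed d_An by simp



lemma cb_Suc': "cb (Suc n) = 2*(2*real n+1)*cb n/(real n+1)"
  using cb_Suc[of n] by (simp add: eq_divide_eq)

lemma cbv: "cb 0 = 1" "cb 1 = 2" "cb 2 = 6" "cb 3 = 20" "cb 4 = 70"
  "cb (Suc 0) = 2" "cb (Suc (Suc 0)) = 6" "cb (Suc (Suc (Suc 0))) = 20" "cb (Suc (Suc (Suc (Suc 0)))) = 70"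
proof -
  show c0: "cb 0 = 1" by (simp add: cb_def)
  have c1: "cb (Suc 0) = 2" using cb_Suc'[of 0] c0 by simp
  have c2: "cb (Suc (Suc 0)) = 6" using cb_Suc'[of "Suc 0"] c1 by simp
  have c3: "cb (Suc (Suc (Suc 0))) = 20" using cb_Suc'[of "Suc (Suc 0)"] c2 by simp
  have c4: "cb (Suc (Suc (Suc (Suc 0)))) = 70" using cb_Suc'[of "Suc (Suc (Suc 0))"] c3 by simp
  show "cb 1 = 2" "cb 2 = 6" "cb 3 = 20" "cb 4 = 70" using c1 c2 c3 c4 by (simp_all add: numeral_eq_Suc)
  show "cb (Suc 0) = 2" "cb (Suc (Suc 0)) = 6" "cb (Suc (Suc (Suc 0))) = 20" "cb (Suc (Suc (Suc (Suc 0)))) = 70"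
    using c1 c2 c3 c4 by simp_all
qed

lemma Tvals: "T_seq 0 = 1" "T_seq 1 = 2" "T_seq 2 = 5" "T_seq 3 = 8" "T_seq 4 = 18" "T_seq 5 = 30"
  "T_seq 6 = 65" "T_seq 7 = 112"
proof -
  have "real (T_seq 0) = 1" using Te[of 0] cbv by simp
  then show "T_seq 0 = 1" by simp
  have "real (T_seq 1) = 2" using To[of 0] cbv by simp
  then show "T_seq 1 = 2" by simp
  have "real (T_seq 2) = 5" using Te[of 1] cbv by simp
  then show "T_seq 2 = 5" by simp
  have "real (T_seq 3) = 8" using To[of 1] cbv by simp
  then show "T_seq 3 = 8" by simp
  have "real (T_seq 4) = 18" using Te[of 2] cbv by simp
  then show "T_seq 4 = 18" by simp
  have "real (T_seq 5) = 30" using To[of 2] cbv by simp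
  then show "T_seq 5 = 30" by simp
  have "real (T_seq 6) = 65" using Te[of 3] cbv by simp
  then show "T_seq 6 = 65" by simp
  have "real (T_seq 7) = 112" using To[of 3] cbv by simp
  then show "T_seq 7 = 112" by simp
qed

lemma map8: "map T_seq [0..<8] = [1, 2, 5, 8, 18, 30, 65, 112]"
proof -
  have "[0..<8] = [0,1,2,3,4,5,6,7::nat]" by code_simp
  then show ?thesis by (simp only: list.map Tvals)
qed

lemma F1: "real ((2*m+1) choose m) * (real m + 1) = (2 * real m + 1) * cb m"
proof -
  have b: "(2*m+1) * ((2*m) choose m) = ((2*m+1) choose (m+1)) * (m+1)"
    using Suc_times_binomial_eq[of "2*m" m] by simp
  have c: "((2*m+1) choose (m+1)) = ((2*m+1) choose m)"
    using binomial_symmetric[of m "2*m+1"] by simp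
  have "real (((2*m+1) choose m) * (m+1)) = real ((2*m+1) * ((2*m) choose m))"
    using b c by (simp only:)
  then show ?thesis unfolding cb_def by (simp add: algebra_simps)
qed

lemma F2: "real ((2*m+2) choose m) * (real m + 2) = (real m + 1) * cb (Suc m)"
proof -
  have t: "2*m+2 = Suc (m + Suc m)" by simp
  have "Suc m * (Suc (m + Suc m) choose Suc m) = Suc (Suc m) * (Suc (m + Suc m) choose m)"
    by (rule Suc_times_binomial_add)
  then have "real (Suc m * (Suc (m + Suc m) choose Suc m)) = real (Suc (Suc m) * (Suc (m + Suc m) choose m))"
    by (simp only:)
  then have "real (Suc m) * real ((2*m+2) choose Suc m) = real (Suc (Suc m)) * real ((2*m+2) choose m)"
    unfolding t by (simp only: of_nat_mult)
  moreover have "cb (Suc m) = real ((2*m+2) choose Suc m)"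
  proof -
    have "2 * Suc m = 2*m+2" by simp
    then show ?thesis unfolding cb_def by (simp only:)
  qed
  ultimately show ?thesis by (simp add: algebra_simps)
qed

lemma ratio_even: "real (T_seq (2 * m)) / real (d_seq (2 * m))
            = (real ((2 * m + 2) choose (m + 1)) - catalan m) / real ((2 * m) choose m)
         \<and> real (T_seq (2 * m)) / real (d_seq (2 * m)) = (4 * real m + 1) / (real m + 1)"
proof -
  have p: "cb m \<noteq> 0" using cb_pos[of m] by simp
  have nz: "real m + 1 \<noteq> 0" by simp
  have b1: "real ((2 * m + 2) choose (m + 1)) = cb (Suc m)"
  proof -
    have "2 * Suc m = 2*m+2" "Suc m = m + 1" by simp_all
    then show ?thesis unfolding cb_def by (simp only:)
  qed
  have cat: "catalan m = cb m / (real m + 1)" by (simp add: catalan_def cb_def)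
  have b0: "real ((2 * m) choose m) = cb m" by (simp add: cb_def)
  have t1: "real (T_seq (2 * m)) = cb m * ((4 * real m + 1) / (real m + 1))"
    unfolding Te using nz by (simp add: field_simps)
  have t2: "real ((2 * m + 2) choose (m + 1)) - catalan m = cb m * ((4 * real m + 1) / (real m + 1))"
  proof -
    have "2*(2*real m+1)*cb m/(real m+1) - cb m/(real m+1) = (2*(2*real m+1)*cb m - cb m)/(real m+1)"
      by (rule diff_divide_distrib[symmetric])
    also have "\<dots> = cb m * (4 * real m + 1) / (real m + 1)" by (simp add: algebra_simps)
    finally show ?thesis unfolding b1 cat cb_Suc' by simp
  qed
  have r: "real (T_seq (2 * m)) / real (d_seq (2 * m)) = (4 * real m + 1) / (real m + 1)"
    unfolding t1 d_even using p by simp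
  show ?thesis unfolding b0 t2 r using p by simp
qed

lemma ratio_odd: "real (T_seq (2 * m + 1)) / real (d_seq (2 * m + 1))
            = 2 * real ((2 * m + 2) choose m) / real ((2 * m + 1) choose m)
         \<and> real (T_seq (2 * m + 1)) / real (d_seq (2 * m + 1)) = 4 * (real m + 1) / (real m + 2)"
proof -
  have p: "cb m \<noteq> 0" using cb_pos[of m] by simp
  have nz: "real m + 1 \<noteq> 0" "real m + 2 \<noteq> 0" "2 * real m + 1 \<noteq> 0" by simp_all
  have f1: "real ((2*m+1) choose m) = cb m * ((2 * real m + 1) / (real m + 1))"
    using F1[of m] nz by (simp add: field_simps)
  have f2: "2 * real ((2*m+2) choose m) = cb m * (4 * (2 * real m + 1) / (real m + 2))"
  proof -
    have "real ((2*m+2) choose m) = (real m + 1) * cb (Suc m) / (real m + 2)"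
      using F2[of m] nz by (simp add: field_simps)
    moreover have "(real m + 1) * (2*(2*real m+1)*cb m/(real m+1)) = 2*(2*real m+1)*cb m" using nz by simp
    ultimately have "real ((2*m+2) choose m) = 2*(2*real m+1)*cb m / (real m + 2)" unfolding cb_Suc' by simp
    then show ?thesis by (simp add: algebra_simps)
  qed
  have t: "real (T_seq (2 * m + 1)) = cb m * (4 * (2 * real m + 1) / (real m + 2))"
  proof -
    have a: "X - X/(real (Suc m)+1) = X*(real m+1)/(real m+2)" for X :: real using nz by (simp add: field_simps)
    have "real (T_seq (2 * m + 1)) = 2 * (cb (Suc m) * (real m+1)) / (real m+2)" unfolding To a by simp
    also have "\<dots> = 2 * (2 * (2 * real m + 1) * cb m) / (real m+2)" unfolding cb_Suc ..
    finally show ?thesis by (simp add: algebra_simps)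
  qed
  have d: "real (d_seq (2 * m + 1)) = cb m * ((2 * real m + 1) / (real m + 1))"
    unfolding d_odd using nz by (simp add: field_simps)
  have q: "(4 * (2 * real m + 1) / (real m + 2)) / ((2 * real m + 1) / (real m + 1)) = 4 * (real m + 1) / (real m + 2)"
  proof -
    have q0: "(4*u/v)/(u/w) = 4*w/v" if "u \<noteq> 0" "v \<noteq> 0" "w \<noteq> 0" for u v w :: real
      using that by (simp add: field_simps)
    show ?thesis using q0[OF nz(3) nz(2) nz(1)] by simp
  qed
  have r: "real (T_seq (2 * m + 1)) / real (d_seq (2 * m + 1)) = 4 * (real m + 1) / (real m + 2)"
    unfolding t d using p q by simp
  show ?thesis unfolding f1 f2 r using r unfolding t d by simp
qed

lemma lim_even: "(\<lambda>m. (4 * real m + 1) / (real m + 1)) \<longlonglongrightarrow> 4"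
proof -
  have "(\<lambda>m. 4 - 3 * inverse (real (Suc m))) \<longlonglongrightarrow> 4 - 3 * 0"
    by (intro tendsto_intros LIMSEQ_inverse_real_of_nat)
  moreover have "(\<lambda>m. 4 - 3 * inverse (real (Suc m))) = (\<lambda>m. (4 * real m + 1) / (real m + 1))"
    by (rule ext) (simp add: field_simps)
  ultimately show ?thesis by simp
qed

lemma lim_odd: "(\<lambda>m. 4 * (real m + 1) / (real m + 2)) \<longlonglongrightarrow> 4"
proof -
  have "(\<lambda>m. inverse (real (Suc (Suc m)))) \<longlonglongrightarrow> 0"
    using LIMSEQ_Suc[OF LIMSEQ_inverse_real_of_nat] .
  then have "(\<lambda>m. 4 - 4 * inverse (real (Suc (Suc m)))) \<longlonglongrightarrow> 4 - 4 * 0"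
    by (intro tendsto_intros)
  moreover have "(\<lambda>m. 4 - 4 * inverse (real (Suc (Suc m)))) = (\<lambda>m. 4 * (real m + 1) / (real m + 2))"
    by (rule ext) (simp add: field_simps)
  ultimately show ?thesis by simp
qed

theorem theorem4p5:
  shows "(\<forall>x::real. 0 < \<bar>x\<bar> \<and> \<bar>x\<bar> < 1/2 \<longrightarrow>
            (\<lambda>n. real (T_seq n) * x ^ n) sums
              (2 * Cgf (x\<^sup>2) * (1 / (2 * x)) * (sqrt ((1 + 2 * x) / (1 - 2 * x)) - 1) - Cgf (x\<^sup>2)))
    \<and> map T_seq [0..<8] = [1, 2, 5, 8, 18, 30, 65, 112]
    \<and> (\<forall>x::real. 0 < \<bar>x\<bar> \<and> \<bar>x\<bar> < 1/2 \<longrightarrow>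
            (\<lambda>m. real (T_seq (2 * m)) * x ^ (2 * m)) sums (Cgf (x\<^sup>2) * (2 * Bgf (x\<^sup>2) - 1)))
    \<and> (\<forall>m. real (T_seq (2 * m)) / real (d_seq (2 * m))
            = (real ((2 * m + 2) choose (m + 1)) - catalan m) / real ((2 * m) choose m)
         \<and> real (T_seq (2 * m)) / real (d_seq (2 * m)) = (4 * real m + 1) / (real m + 1))
    \<and> (\<lambda>m. real (T_seq (2 * m)) / real (d_seq (2 * m))) \<longlonglongrightarrow> 4
    \<and> (\<forall>x::real. 0 < \<bar>x\<bar> \<and> \<bar>x\<bar> < 1/2 \<longrightarrow>
            (\<lambda>m. real (T_seq (2 * m + 1)) * x ^ (2 * m + 1)) sums (2 * x * Bgf (x\<^sup>2) * (Cgf (x\<^sup>2))\<^sup>2))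
    \<and> (\<forall>m. real (T_seq (2 * m + 1)) / real (d_seq (2 * m + 1))
            = 2 * real ((2 * m + 2) choose m) / real ((2 * m + 1) choose m)
         \<and> real (T_seq (2 * m + 1)) / real (d_seq (2 * m + 1)) = 4 * (real m + 1) / (real m + 2))
    \<and> (\<lambda>m. real (T_seq (2 * m + 1)) / real (d_seq (2 * m + 1))) \<longlonglongrightarrow> 4"
proof (intro conjI allI impI)
  fix x :: real assume x: "0 < \<bar>x\<bar> \<and> \<bar>x\<bar> < 1/2"
  note G = gf_main[of T_seq, OF Te To conjunct1[OF x] conjunct2[OF x]]
  show "(\<lambda>n. real (T_seq n) * x ^ n) sums
              (2 * Cgf (x\<^sup>2) * (1 / (2 * x)) * (sqrt ((1 + 2 * x) / (1 - 2 * x)) - 1) - Cgf (x\<^sup>2))"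
    by (rule G(3))
  show "(\<lambda>m. real (T_seq (2 * m)) * x ^ (2 * m)) sums (Cgf (x\<^sup>2) * (2 * Bgf (x\<^sup>2) - 1))"
    by (rule G(1))
  show "(\<lambda>m. real (T_seq (2 * m + 1)) * x ^ (2 * m + 1)) sums (2 * x * Bgf (x\<^sup>2) * (Cgf (x\<^sup>2))\<^sup>2)"
    by (rule G(2))
next
  show "map T_seq [0..<8] = [1, 2, 5, 8, 18, 30, 65, 112]" by (rule map8)
next
  fix m show "real (T_seq (2 * m)) / real (d_seq (2 * m))
            = (real ((2 * m + 2) choose (m + 1)) - catalan m) / real ((2 * m) choose m)"
    using ratio_even by blast
next
  fix m show "real (T_seq (2 * m)) / real (d_seq (2 * m)) = (4 * real m + 1) / (real m + 1)"
    using ratio_even by blast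
next
  show "(\<lambda>m. real (T_seq (2 * m)) / real (d_seq (2 * m))) \<longlonglongrightarrow> 4"
  proof -
    have "(\<lambda>m. real (T_seq (2 * m)) / real (d_seq (2 * m))) = (\<lambda>m. (4 * real m + 1) / (real m + 1))"
      by (rule ext) (rule ratio_even[THEN conjunct2])
    then show ?thesis using lim_even by simp
  qed
next
  fix m show "real (T_seq (2 * m + 1)) / real (d_seq (2 * m + 1))
            = 2 * real ((2 * m + 2) choose m) / real ((2 * m + 1) choose m)"
    using ratio_odd by blast
next
  fix m show "real (T_seq (2 * m + 1)) / real (d_seq (2 * m + 1)) = 4 * (real m + 1) / (real m + 2)"
    using ratio_odd by blast
next
  show "(\<lambda>m. real (T_seq (2 * m + 1)) / real (d_seq (2 * m + 1))) \<longlonglongrightarrow> 4"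
  proof -
    have "(\<lambda>m. real (T_seq (2 * m + 1)) / real (d_seq (2 * m + 1))) = (\<lambda>m. 4 * (real m + 1) / (real m + 2))"
      by (rule ext) (rule ratio_odd[THEN conjunct2])
    then show ?thesis using lim_odd by simp
  qed
qed

end
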